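(* Assume $H=0$ and that the Riccati equation $\dot K+K(A+G)+(A+G)^TK-\gamma K^2-\widehat Q=0$, $K(T)=-H$, has a unique solution on $[0,T]$. Let $\Phi(t,s)$ be the fundamental solution matrix of $\dot\varphi=(A+G-\gamma K(t))\varphi$ with $\Phi(s,s)=I$, and define $c_1=\max_{t\in[0,T]}|K(t)|$, $c_2=\max_{0\le t,s\le T}|\Phi(t,s)|$, $c_3=\max_{t\in[0,T]}\int_t^T|e^{A(s-t)}|\,s\,ds$, $c_4=\max_{t\in[0,T]}\int_t^T|e^{A(s-t)}|(Ts-\frac{s^2}{2})ds$. If $c_2\,|BR^{-1}B^T|\cdot|Q(I-\Gamma)|\,(c_3+\gamma c_1c_2c_4)<1$, then the system (MF) has a unique solution on $[0,T]$.
   Context: Fix integers $n,n_1\ge1$, $T>0$, constant matrices $A,G,\Gamma\in\mathbb R^{n\times n}$, $B\in\mathbb R^{n\times n_1}$, $\eta,m_0\in\mathbb R^n$, $\gamma>0$, symmetric $Q\ge0$, $H\ge0$ ($n\times n$), $R>0$ ($n_1\times n_1$). $|\cdot|$ is the Euclidean norm for vectors and the Frobenius norm for matrices; $\widehat Q=(I-\Gamma)^TQ(I-\Gamma)$. (MF) is the system $\dot{\mathbf m}=(A+G)\mathbf m+BR^{-1}B^T\mathbf y+\gamma\mathbf p$, $\dot{\mathbf p}=-(A+G)^T\mathbf p-(I-\Gamma)^TQ[\mathbf m-(\Gamma\mathbf m+\eta)]$, $\dot{\mathbf y}=-A^T\mathbf y+Q[\mathbf m-(\Gamma\mathbf m+\eta)]$,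 $\mathbf m(0)=m_0$, $\mathbf p(T)=H\mathbf m(T)$, $\mathbf y(T)=-H\mathbf m(T)$. *)

theory Defs
  imports "HOL-Analysis.Analysis"
begin

text \<open>Matrix powers and the matrix exponential for square matrices real^'n^'n
  (the type's own times/exp are componentwise, so we define them via the matrix product).\<close>

primrec mpow :: "real^'n^'n \<Rightarrow> nat \<Rightarrow> real^'n^'n" where
  "mpow M 0 = mat 1"
| "mpow M (Suc k) = mpow M k ** M"

definition mexp :: "real^'n^'n \<Rightarrow> real^'n^'n" where
  "mexp M = (\<Sum>k. (1 / fact k) *\<^sub>R mpow M k)"

definition psd :: "real^'n^'n \<Rightarrow> bool" where
  "psd M \<longleftrightarrow> transpose M = M \<and> (\<forall>x. 0 \<le> x \<bullet> (M *v x))"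

definition pd :: "real^'n^'n \<Rightarrow> bool" where
  "pd M \<longleftrightarrow> transpose M = M \<and> (\<forall>x. x \<noteq> 0 \<longrightarrow> 0 < x \<bullet> (M *v x))"

definition riccati_sol ::
  "real^'n^'n \<Rightarrow> real^'n^'n \<Rightarrow> real \<Rightarrow> real^'n^'n \<Rightarrow> real^'n^'n \<Rightarrow> real
   \<Rightarrow> (real \<Rightarrow> real^'n^'n) \<Rightarrow> bool" where
  "riccati_sol A G \<gamma> Qh H T K \<longleftrightarrow>
     K T = - H \<and>
     (\<forall>t\<in>{0..T}. (K has_vector_derivative
        (- (K t ** (A + G)) - transpose (A + G) ** K t + \<gamma> *\<^sub>R (K t ** K t) + Qh))
        (at t within {0..T}))"

definition fundamental_matrix ::
  "real^'n^'n \<Rightarrow> real^'n^'n \<Rightarrow> real \<Rightarrow> (real \<Rightarrow> real^'n^'n) \<Rightarrow> real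
   \<Rightarrow> (real \<Rightarrow> real \<Rightarrow> real^'n^'n) \<Rightarrow> bool" where
  "fundamental_matrix A G \<gamma> K T \<Phi> \<longleftrightarrow>
     (\<forall>s\<in>{0..T}. \<Phi> s s = mat 1 \<and>
        (\<forall>t\<in>{0..T}. ((\<lambda>\<tau>. \<Phi> \<tau> s) has_vector_derivative
            ((A + G - \<gamma> *\<^sub>R K t) ** \<Phi> t s)) (at t within {0..T})))"

definition MF_sol ::
  "real^'n^'n \<Rightarrow> real^'n^'n \<Rightarrow> real^'n^'n \<Rightarrow> real^'k^'n \<Rightarrow> real^'k^'k \<Rightarrow> real^'n^'n
   \<Rightarrow> real^'n^'n \<Rightarrow> real^'n \<Rightarrow> real^'n \<Rightarrow> real \<Rightarrow> real
   \<Rightarrow> (real \<Rightarrow> real^'n) \<Rightarrow> (real \<Rightarrow> real^'n) \<Rightarrow> (real \<Rightarrow> real^'n) \<Rightarrow> bool" where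
  "MF_sol A G \<Gamma> B R Q H \<eta> m0 \<gamma> T m p y \<longleftrightarrow>
     m 0 = m0 \<and> p T = H *v m T \<and> y T = - (H *v m T) \<and>
     (\<forall>t\<in>{0..T}.
        (m has_vector_derivative
           ((A + G) *v m t + (B ** matrix_inv R ** transpose B) *v y t + \<gamma> *\<^sub>R p t))
           (at t within {0..T}) \<and>
        (p has_vector_derivative
           (- (transpose (A + G) *v p t)
            - (transpose (mat 1 - \<Gamma>) ** Q) *v (m t - (\<Gamma> *v m t + \<eta>))))
           (at t within {0..T}) \<and>
        (y has_vector_derivative
           (- (transpose A *v y t) + Q *v (m t - (\<Gamma> *v m t + \<eta>))))
           (at t within {0..T}))"

end

theory Submission
  imports Defs
begin


lemma norm_vec_sq: "(norm (x::real^'n))^2 = (\<Sum>i\<in>UNIV. (x$i)^2)"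
  by (simp add: norm_vec_def L2_set_def real_norm_def sum_nonneg)

lemma norm_mat_sq: "(norm (X::real^'n^'m))^2 = (\<Sum>i\<in>UNIV. (norm (X$i))^2)"
  by (simp add: norm_vec_def L2_set_def sum_nonneg)

lemma mv_row: "(X *v v) $ i = X $ i \<bullet> (v::real^'n)"
  by (simp add: matrix_vector_mult_def inner_vec_def mult.commute)

lemma norm_mv: "norm (X *v v) \<le> norm (X::real^'n^'m) * norm (v::real^'n)"
proof -
  have "(norm (X *v v))^2 = (\<Sum>i\<in>UNIV. ((X *v v)$i)^2)" by (rule norm_vec_sq)
  also have "\<dots> \<le> (\<Sum>i\<in>UNIV. (norm (X$i))^2 * (norm v)^2)"
  proof (rule sum_mono)
    fix i
    have "\<bar>(X *v v)$i\<bar> \<le> norm (X$i) * norm v" unfolding mv_row by (rule Cauchy_Schwarz_ineq2)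
    then have "\<bar>(X *v v)$i\<bar>^2 \<le> (norm (X$i) * norm v)^2" by (rule power_mono) simp
    then show "((X *v v)$i)^2 \<le> (norm (X$i))^2 * (norm v)^2" by (simp add: power_mult_distrib)
  qed
  also have "\<dots> = (norm X * norm v)^2" by (simp add: norm_mat_sq power_mult_distrib sum_distrib_right)
  finally show ?thesis by (rule power2_le_imp_le) simp
qed

lemma norm_transpose: "norm (transpose (X::real^'n^'m)) = norm X"
proof -
  have "(norm (transpose X))^2 = (norm X)^2"
    unfolding norm_mat_sq norm_vec_sq by (simp add: transpose_def) (rule sum.swap)
  then show ?thesis by (simp add: power2_eq_iff_nonneg)
qed

lemma mm_row: "((X::real^'n^'m) ** (Y::real^'k^'n)) $ i = transpose Y *v (X $ i)"
  by (simp add: vec_eq_iff matrix_matrix_mult_def vector_matrix_mult_def mult.commute)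

lemma matrix_add_rdistrib': "((A::real^'n^'m) + B) ** C = A ** C + B ** C"
  by (vector matrix_matrix_mult_def sum.distrib[symmetric] field_simps)

lemma norm_mm: "norm (X ** Y) \<le> norm (X::real^'n^'m) * norm (Y::real^'k^'n)"
proof -
  have "(norm (X ** Y))^2 = (\<Sum>i\<in>UNIV. (norm ((X**Y)$i))^2)" by (rule norm_mat_sq)
  also have "\<dots> \<le> (\<Sum>i\<in>UNIV. (norm (X$i))^2 * (norm Y)^2)"
  proof (rule sum_mono)
    fix i
    have "norm ((X**Y)$i) \<le> norm (X$i) * norm Y" unfolding mm_row
      using norm_mv[of "transpose Y" "X$i"] by (simp add: norm_transpose mult.commute)
    then show "(norm ((X**Y)$i))^2 \<le> (norm (X$i))^2 * (norm Y)^2"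
      by (metis norm_ge_zero power_mono power_mult_distrib)
  qed
  also have "\<dots> = (norm X * norm Y)^2" by (simp add: norm_mat_sq power_mult_distrib sum_distrib_right)
  finally show ?thesis by (rule power2_le_imp_le) simp
qed

lemma bb_mm: "bounded_bilinear ((**) :: real^'n^'m \<Rightarrow> real^'k^'n \<Rightarrow> real^'k^'m)"
proof
  show "\<exists>K. \<forall>a b. norm (a ** b) \<le> norm (a::real^'n^'m) * norm (b::real^'k^'n) * K"
    by (rule exI[of _ 1]) (simp add: norm_mm)
qed (simp_all add: matrix_add_rdistrib' matrix_add_ldistrib scalar_matrix_assoc matrix_scalar_ac)

lemma bb_mv: "bounded_bilinear ((*v) :: real^'n^'m \<Rightarrow> real^'n \<Rightarrow> real^'m)"
proof
  show "\<exists>K. \<forall>a b. norm (a *v b) \<le> norm (a::real^'n^'m) * norm (b::real^'n) * K"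
    by (rule exI[of _ 1]) (simp add: norm_mv)
qed (simp_all add: matrix_vector_mult_add_rdistrib matrix_vector_right_distrib matrix_vector_mult_scaleR, vector matrix_vector_mult_def sum_distrib_left algebra_simps)

lemma bl_transpose: "bounded_linear (transpose :: real^'n^'m \<Rightarrow> real^'m^'n)"
proof
  show "\<exists>K. \<forall>x. norm (transpose x) \<le> norm (x::real^'n^'m) * K"
    by (rule exI[of _ 1]) (simp add: norm_transpose)
qed (simp_all add: transpose_def vec_eq_iff)


lemma mpow_scaleR: "mpow (t *\<^sub>R A) k = (t^k) *\<^sub>R mpow (A::real^'n^'n) k"
  by (induction k) (simp_all add: matrix_scalar_ac scalar_matrix_assoc[symmetric])

lemma mpow_comm: "A ** mpow A k = mpow (A::real^'n^'n) k ** A"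
  by (induction k) (simp_all add: matrix_mul_assoc)

lemma norm_mpow: "norm (mpow (A::real^'n^'n) k) \<le> norm (mat 1::real^'n^'n) * norm A ^ k"
proof (induction k)
  case (Suc k)
  have "norm (mpow A (Suc k)) \<le> norm (mpow A k) * norm A" by (simp add: norm_mm)
  also have "\<dots> \<le> norm (mat 1::real^'n^'n) * norm A ^ k * norm A"
    using Suc by (simp add: mult_right_mono)
  finally show ?case by (simp add: mult_ac)
qed simp

lemma summable_mexp_series: "summable (\<lambda>k. (t^k / fact k) *\<^sub>R mpow (A::real^'n^'n) k)"
proof (rule summable_comparison_test')
  show "summable (\<lambda>k. norm (mat 1::real^'n^'n) * (inverse (fact k) * (\<bar>t\<bar> * norm A)^k))"
    by (intro summable_mult summable_exp)
  fix k :: nat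
  have "norm ((t^k / fact k) *\<^sub>R mpow A k) = (\<bar>t\<bar>^k / fact k) * norm (mpow A k)"
    by (simp add: power_abs)
  also have "\<dots> \<le> (\<bar>t\<bar>^k / fact k) * (norm (mat 1::real^'n^'n) * norm A ^ k)"
    by (intro mult_left_mono norm_mpow) simp
  also have "\<dots> = norm (mat 1::real^'n^'n) * (inverse (fact k) * (\<bar>t\<bar> * norm A)^k)"
    by (simp add: power_mult_distrib field_simps)
  finally show "norm ((t^k / fact k) *\<^sub>R mpow A k) \<le> norm (mat 1::real^'n^'n) * (inverse (fact k) * (\<bar>t\<bar> * norm A)^k)" .
qed

lemma mexp_scaleR: "mexp (t *\<^sub>R A) = (\<Sum>k. (t^k / fact k) *\<^sub>R mpow (A::real^'n^'n) k)"
  by (simp add: mexp_def mpow_scaleR)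

lemma bl_entry: "bounded_linear (\<lambda>X::real^'n^'m. X $ i $ j)"
  by (intro bounded_linear_compose[OF bounded_linear_vec_nth] bounded_linear_vec_nth)

lemma bl_mmr: "bounded_linear (\<lambda>X::real^'n^'m. X ** (B::real^'k^'n))"
  by (rule bounded_bilinear.bounded_linear_left[OF bb_mm])

lemma bl_mml: "bounded_linear (\<lambda>X::real^'k^'n. (B::real^'n^'m) ** X)"
  by (rule bounded_bilinear.bounded_linear_right[OF bb_mm])

lemma mat_entrywise_deriv:
  fixes E :: "real \<Rightarrow> real^'n^'m"
  assumes "\<And>i j. ((\<lambda>t. E t $ i $ j) has_real_derivative (D $ i $ j)) (at t within S)"
  shows "(E has_vector_derivative D) (at t within S)"
proof -
  let ?e = "\<lambda>i j. (\<chi> a b. if a = i \<and> b = j then 1 else 0) :: real^'n^'m"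
  have dl: "(\<Sum>x\<in>UNIV. \<Sum>xa\<in>UNIV. if i = x \<and> ia = xa then g x xa else 0) = (g i ia::real)" for i :: 'm and ia :: 'n and g
  proof -
    have "\<And>x. (\<Sum>xa\<in>UNIV. if i = x \<and> ia = xa then g x xa else 0) = (if i = x then g x ia else 0)"
      by (case_tac "i = x") auto
    then show ?thesis using sum.delta'[of UNIV ia "g i"] by simp
  qed
  have eq: "\<And>X::real^'n^'m. X = (\<Sum>i\<in>UNIV. \<Sum>j\<in>UNIV. (X $ i $ j) *\<^sub>R ?e i j)"
    by (simp add: vec_eq_iff sum_component if_distrib if_distribR dl cong: if_cong)
  have "((\<lambda>t. \<Sum>i\<in>UNIV. \<Sum>j\<in>UNIV. (E t $ i $ j) *\<^sub>R ?e i j) has_vector_derivative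
        (\<Sum>i\<in>UNIV. \<Sum>j\<in>UNIV. (D $ i $ j) *\<^sub>R ?e i j)) (at t within S)"
    by (intro has_vector_derivative_sum has_vector_derivative_scaleR[where g'=0, simplified] assms ballI has_vector_derivative_const)
  moreover have "(\<lambda>t. \<Sum>i\<in>UNIV. \<Sum>j\<in>UNIV. (E t $ i $ j) *\<^sub>R ?e i j) = E"
    by (rule ext, rule eq[symmetric])
  moreover have "(\<Sum>i\<in>UNIV. \<Sum>j\<in>UNIV. (D $ i $ j) *\<^sub>R ?e i j) = D"
    by (rule eq[symmetric])
  ultimately show ?thesis by simp
qed

lemma mexp_entry: "mexp (t *\<^sub>R A) $ i $ j = (\<Sum>k. (mpow (A::real^'n^'n) k $ i $ j / fact k) * t^k)"
  unfolding mexp_scaleR bounded_linear.suminf[OF bl_entry summable_mexp_series]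
  by (simp add: ac_simps)

lemma mexp_deriv:
  "((\<lambda>t. mexp (t *\<^sub>R A)) has_vector_derivative (mexp (t *\<^sub>R A) ** (A::real^'n^'n))) (at t within S)"
proof (rule mat_entrywise_deriv)
  fix i j
  define c where "c k = mpow A k $ i $ j / fact k" for k
  have sc: "summable (\<lambda>k. c k * y^k)" for y
  proof -
    have "summable (\<lambda>k. ((y^k / fact k) *\<^sub>R mpow A k) $ i $ j)"
      by (rule bounded_linear.summable[OF bl_entry summable_mexp_series])
    then show ?thesis by (simp add: c_def mult.commute)
  qed
  have d: "((\<lambda>t. \<Sum>k. c k * t^k) has_real_derivative (\<Sum>k. diffs c k * t^k)) (at t)"
    by (rule termdiffs_strong_converges_everywhere[OF sc])
  have sm: "summable (\<lambda>k. ((t^k / fact k) *\<^sub>R mpow A k) ** A)"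
    by (rule bounded_linear.summable[OF bl_mmr summable_mexp_series])
  have "(mexp (t *\<^sub>R A) ** A) = (\<Sum>k. ((t^k / fact k) *\<^sub>R mpow A k) ** A)"
    unfolding mexp_scaleR by (rule bounded_linear.suminf[OF bl_mmr summable_mexp_series])
  then have "(mexp (t *\<^sub>R A) ** A) $ i $ j = (\<Sum>k. (((t^k / fact k) *\<^sub>R mpow A k) ** A) $ i $ j)"
    using bounded_linear.suminf[OF bl_entry sm] by simp
  also have "\<dots> = (\<Sum>k. diffs c k * t^k)"
  proof -
    have dk: "diffs c k = mpow A (Suc k) $ i $ j / fact k" for k
      unfolding diffs_def c_def fact_Suc[of k] by (simp del: mpow.simps fact_Suc)
    show ?thesis
      by (rule arg_cong[where f=suminf]) (simp add: fun_eq_iff dk scalar_matrix_assoc[symmetric] del: mpow.simps, simp add: field_simps)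
  qed
  finally show "((\<lambda>t. mexp (t *\<^sub>R A) $ i $ j) has_real_derivative (mexp (t *\<^sub>R A) ** A) $ i $ j) (at t within S)"
    using has_field_derivative_at_within[OF d] unfolding mexp_entry c_def by simp
qed

lemma mexp_deriv':
  "((\<lambda>t. mexp (t *\<^sub>R A)) has_vector_derivative ((A::real^'n^'n) ** mexp (t *\<^sub>R A))) (at t within S)"
proof -
  have "A ** mexp (t *\<^sub>R A) = mexp (t *\<^sub>R A) ** A"
    unfolding mexp_scaleR bounded_linear.suminf[OF bl_mmr summable_mexp_series]
      bounded_linear.suminf[OF bl_mml summable_mexp_series]
    by (simp add: matrix_scalar_ac scalar_matrix_assoc[symmetric] mpow_comm)
  then show ?thesis using mexp_deriv by simp
qed

lemma mexp_zero: "mexp (0 *\<^sub>R (A::real^'n^'n)) = mat 1"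
proof -
  have "(\<Sum>k. ((0::real)^k / fact k) *\<^sub>R mpow A k) = (\<Sum>k\<in>{0}. ((0::real)^k / fact k) *\<^sub>R mpow A k)"
    by (rule suminf_finite) (auto simp: zero_power)
  then show ?thesis using mexp_scaleR[of 0 A] by simp
qed


lemma deriv_interior:
  assumes "(x has_vector_derivative d) (at s within {a..b})" "a < s" "s < (b::real)"
  shows "(x has_vector_derivative d) (at s)"
proof -
  have "(x has_vector_derivative d) (at s within {a<..<b})"
    by (rule has_vector_derivative_within_subset[OF assms(1)]) auto
  then show ?thesis using assms by (subst (asm) has_vector_derivative_within_open) auto
qed

lemma deriv_cont_on:
  assumes "\<And>s. s \<in> S \<Longrightarrow> (x has_vector_derivative x' s) (at s within S)"
  shows "continuous_on S x"
  using assms has_vector_derivative_continuous continuous_on_eq_continuous_within by blast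

lemma growth_fwd:
  fixes x :: "real \<Rightarrow> 'a::real_inner"
  assumes D: "\<And>s. s \<in> {a..b} \<Longrightarrow> (x has_vector_derivative x' s) (at s within {a..b})"
    and B: "\<And>s. s \<in> {a..b} \<Longrightarrow> norm (x' s) \<le> L * norm (x s)" and L: "L \<ge> 0"
    and t0: "t0 \<in> {a..b}" and t: "t \<in> {a..b}" and le: "t0 \<le> t"
  shows "norm (x t) \<le> norm (x t0) * exp (L * (t - t0))"
proof -
  define g where "g s = exp (-2*L*(s - t0)) * (x s \<bullet> x s)" for s
  have cx: "continuous_on {a..b} x" by (rule deriv_cont_on[OF D])
  have "continuous_on {t0..t} x" using t0 t by (intro continuous_on_subset[OF cx]) auto
  then have cg: "continuous_on {t0..t} g" unfolding g_def by (intro continuous_intros)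
  have "g t0 \<ge> g t"
  proof (rule DERIV_nonpos_imp_decreasing_open[OF le _ cg])
    fix s assume s: "t0 < s" "s < t"
    then have sab: "a < s" "s < b" "s \<in> {a..b}" using t0 t by auto
    have dx: "(x has_vector_derivative x' s) (at s)" by (rule deriv_interior[OF D[OF sab(3)] sab(1,2)])
    have "((\<lambda>s. x s \<bullet> x s) has_vector_derivative (x s \<bullet> x' s + x' s \<bullet> x s)) (at s)"
      by (rule bounded_bilinear.has_vector_derivative[OF bounded_bilinear_inner dx dx])
    then have di: "((\<lambda>s. x s \<bullet> x s) has_real_derivative (2 * (x s \<bullet> x' s))) (at s)"
      by (simp add: has_real_derivative_iff_has_vector_derivative inner_commute)
    have de: "((\<lambda>s. exp (-2*L*(s - t0))) has_real_derivative (exp (-2*L*(s - t0)) * (-2*L))) (at s)"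
      by (auto intro!: derivative_eq_intros)
    have dg: "(g has_real_derivative (exp (-2*L*(s - t0)) * (-2*L) * (x s \<bullet> x s) + exp (-2*L*(s - t0)) * (2 * (x s \<bullet> x' s)))) (at s)"
      unfolding g_def using DERIV_mult[OF de di] by (simp add: mult_ac)
    have "x s \<bullet> x' s \<le> norm (x s) * norm (x' s)" by (rule Cauchy_Schwarz_ineq2[THEN abs_le_D1])
    also have "\<dots> \<le> norm (x s) * (L * norm (x s))" by (rule mult_left_mono[OF B[OF sab(3)]]) simp
    also have "\<dots> = L * (x s \<bullet> x s)" by (simp add: power2_norm_eq_inner[symmetric] power2_eq_square)
    finally have "-2*L*(x s \<bullet> x s) + 2 * (x s \<bullet> x' s) \<le> 0" by simp
    then have "exp (-2*L*(s - t0)) * (-2*L*(x s \<bullet> x s) + 2 * (x s \<bullet> x' s)) \<le> 0"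
      by (simp add: mult_nonneg_nonpos)
    then show "\<exists>y. (g has_real_derivative y) (at s) \<and> y \<le> 0" using dg
      by (intro exI[of _ "exp (-2*L*(s - t0)) * (-2*L) * (x s \<bullet> x s) + exp (-2*L*(s - t0)) * (2 * (x s \<bullet> x' s))"])
         (simp add: algebra_simps)
  qed
  then have "exp (-2*L*(t - t0)) * (norm (x t))^2 \<le> (norm (x t0))^2"
    by (simp add: g_def power2_norm_eq_inner)
  then have "exp (2*L*(t - t0)) * (exp (-2*L*(t - t0)) * (norm (x t))^2) \<le> exp (2*L*(t - t0)) * (norm (x t0))^2"
    by (rule mult_left_mono) simp
  moreover have "exp (2*L*(t - t0)) * exp (-2*L*(t - t0)) = 1" by (simp add: exp_add[symmetric])
  moreover have "exp (2*L*(t - t0)) = (exp (L*(t - t0)))^2" by (simp add: mult.assoc exp_double[symmetric])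
  ultimately have "(norm (x t))^2 \<le> (norm (x t0) * exp (L * (t - t0)))^2"
    by (simp only: mult.assoc[symmetric] power_mult_distrib mult_1_left) (simp add: mult.commute)
  then show ?thesis by (rule power2_le_imp_le) simp
qed

lemma growth_bwd:
  fixes x :: "real \<Rightarrow> 'a::real_inner"
  assumes D: "\<And>s. s \<in> {a..b} \<Longrightarrow> (x has_vector_derivative x' s) (at s within {a..b})"
    and B: "\<And>s. s \<in> {a..b} \<Longrightarrow> norm (x' s) \<le> L * norm (x s)" and L: "L \<ge> 0"
    and t0: "t0 \<in> {a..b}" and t: "t \<in> {a..b}" and le: "t \<le> t0"
  shows "norm (x t) \<le> norm (x t0) * exp (L * (t0 - t))"
proof -
  define g where "g s = exp (2*L*(s - t0)) * (x s \<bullet> x s)" for s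
  have cx: "continuous_on {a..b} x" by (rule deriv_cont_on[OF D])
  have "continuous_on {t..t0} x" using t0 t by (intro continuous_on_subset[OF cx]) auto
  then have cg: "continuous_on {t..t0} g" unfolding g_def by (intro continuous_intros)
  have "g t \<le> g t0"
  proof (rule DERIV_nonneg_imp_increasing_open[OF le _ cg])
    fix s assume s: "t < s" "s < t0"
    then have sab: "a < s" "s < b" "s \<in> {a..b}" using t0 t by auto
    have dx: "(x has_vector_derivative x' s) (at s)" by (rule deriv_interior[OF D[OF sab(3)] sab(1,2)])
    have "((\<lambda>s. x s \<bullet> x s) has_vector_derivative (x s \<bullet> x' s + x' s \<bullet> x s)) (at s)"
      by (rule bounded_bilinear.has_vector_derivative[OF bounded_bilinear_inner dx dx])
    then have di: "((\<lambda>s. x s \<bullet> x s) has_real_derivative (2 * (x s \<bullet> x' s))) (at s)"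
      by (simp add: has_real_derivative_iff_has_vector_derivative inner_commute)
    have de: "((\<lambda>s. exp (2*L*(s - t0))) has_real_derivative (exp (2*L*(s - t0)) * (2*L))) (at s)"
      by (auto intro!: derivative_eq_intros)
    have dg: "(g has_real_derivative (exp (2*L*(s - t0)) * (2*L) * (x s \<bullet> x s) + exp (2*L*(s - t0)) * (2 * (x s \<bullet> x' s)))) (at s)"
      unfolding g_def using DERIV_mult[OF de di] by (simp add: mult_ac)
    have "- (x s \<bullet> x' s) \<le> norm (x s) * norm (x' s)" by (rule Cauchy_Schwarz_ineq2[THEN abs_le_D2])
    also have "\<dots> \<le> norm (x s) * (L * norm (x s))" by (rule mult_left_mono[OF B[OF sab(3)]]) simp
    also have "\<dots> = L * (x s \<bullet> x s)" by (simp add: power2_norm_eq_inner[symmetric] power2_eq_square)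
    finally have "2*L*(x s \<bullet> x s) + 2 * (x s \<bullet> x' s) \<ge> 0" by simp
    then have "exp (2*L*(s - t0)) * (2*L*(x s \<bullet> x s) + 2 * (x s \<bullet> x' s)) \<ge> 0"
      by simp
    then show "\<exists>y. (g has_real_derivative y) (at s) \<and> y \<ge> 0" using dg
      by (intro exI[of _ "exp (2*L*(s - t0)) * (2*L) * (x s \<bullet> x s) + exp (2*L*(s - t0)) * (2 * (x s \<bullet> x' s))"])
         (simp add: algebra_simps)
  qed
  then have "exp (2*L*(t - t0)) * (norm (x t))^2 \<le> (norm (x t0))^2"
    by (simp add: g_def power2_norm_eq_inner)
  then have "exp (2*L*(t0 - t)) * (exp (2*L*(t - t0)) * (norm (x t))^2) \<le> exp (2*L*(t0 - t)) * (norm (x t0))^2"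
    by (rule mult_left_mono) simp
  moreover have "exp (2*L*(t0 - t)) * exp (2*L*(t - t0)) = 1" by (simp add: exp_add[symmetric] algebra_simps)
  moreover have "exp (2*L*(t0 - t)) = (exp (L*(t0 - t)))^2" by (simp add: mult.assoc exp_double[symmetric])
  ultimately have "(norm (x t))^2 \<le> (norm (x t0) * exp (L * (t0 - t)))^2"
    by (simp only: mult.assoc[symmetric] power_mult_distrib mult_1_left) (simp add: mult.commute)
  then show ?thesis by (rule power2_le_imp_le) simp
qed

lemma growth:
  fixes x :: "real \<Rightarrow> 'a::real_inner"
  assumes D: "\<And>s. s \<in> {a..b} \<Longrightarrow> (x has_vector_derivative x' s) (at s within {a..b})"
    and B: "\<And>s. s \<in> {a..b} \<Longrightarrow> norm (x' s) \<le> L * norm (x s)" and L: "L \<ge> 0"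
    and t0: "t0 \<in> {a..b}" and t: "t \<in> {a..b}"
  shows "norm (x t) \<le> norm (x t0) * exp (L * \<bar>t - t0\<bar>)"
proof (cases "t0 \<le> t")
  case True then show ?thesis using growth_fwd[OF D B L t0 t] by simp
next
  case False then show ?thesis using growth_bwd[OF D B L t0 t] by simp
qed

lemma ode_zero:
  fixes x :: "real \<Rightarrow> 'a::real_inner"
  assumes D: "\<And>s. s \<in> {a..b} \<Longrightarrow> (x has_vector_derivative x' s) (at s within {a..b})"
    and B: "\<And>s. s \<in> {a..b} \<Longrightarrow> norm (x' s) \<le> L * norm (x s)" and L: "L \<ge> 0"
    and t0: "t0 \<in> {a..b}" and z: "x t0 = 0" and t: "t \<in> {a..b}"
  shows "x t = 0"
  using growth[OF D B L t0 t] z by simp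


lemma has_vd_mmr:
  assumes "(f has_vector_derivative f') (at t within S)"
  shows "((\<lambda>t. f t ** (C::real^'k^'n)) has_vector_derivative (f' ** C)) (at t within S)"
  using bounded_bilinear.has_vector_derivative[OF bb_mm assms has_vector_derivative_const] by simp

lemma has_vd_mml:
  assumes "(f has_vector_derivative f') (at t within S)"
  shows "((\<lambda>t. (C::real^'n^'m) ** f t) has_vector_derivative (C ** f')) (at t within S)"
  using bounded_bilinear.has_vector_derivative[OF bb_mm has_vector_derivative_const assms] by simp

lemma mdl: "(A::real^'n^'m) ** (B - C) = A ** B - A ** (C::real^'k^'n)"
  by (vector matrix_matrix_mult_def sum_subtractf[symmetric] field_simps)

lemma mdr: "((A::real^'n^'m) - B) ** (C::real^'k^'n) = A ** C - B ** C"
  by (vector matrix_matrix_mult_def sum_subtractf[symmetric] field_simps)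

locale fund =
  fixes M :: "real \<Rightarrow> real^'n^'n" and \<Phi> :: "real \<Rightarrow> real \<Rightarrow> real^'n^'n" and T LM :: real
  assumes T: "0 < T" and LM: "0 \<le> LM" and Mb: "\<And>t. t \<in> {0..T} \<Longrightarrow> norm (M t) \<le> LM"
    and Phi1: "\<And>s. s \<in> {0..T} \<Longrightarrow> \<Phi> s s = mat 1"
    and PhiD: "\<And>s t. s \<in> {0..T} \<Longrightarrow> t \<in> {0..T} \<Longrightarrow>
        ((\<lambda>\<tau>. \<Phi> \<tau> s) has_vector_derivative (M t ** \<Phi> t s)) (at t within {0..T})"
begin

definition "\<Psi> t = \<Phi> t 0"
definition "\<Lambda> s = \<Phi> 0 s"

lemma Mbound: "t \<in> {0..T} \<Longrightarrow> norm (M t ** X) \<le> LM * norm X"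
  by (meson Mb mult_right_mono norm_ge_zero norm_mm order_trans)

lemma zero0: "0 \<in> {0..T}" using T by simp

lemma cocycle: assumes s: "s \<in> {0..T}" and t: "t \<in> {0..T}" shows "\<Phi> t s ** \<Phi> s 0 = \<Phi> t 0"
proof -
  let ?X = "\<lambda>\<tau>. \<Phi> \<tau> s ** \<Phi> s 0 - \<Phi> \<tau> 0"
  have D: "(?X has_vector_derivative M \<tau> ** ?X \<tau>) (at \<tau> within {0..T})" if "\<tau> \<in> {0..T}" for \<tau>
  proof -
    have "(?X has_vector_derivative (M \<tau> ** \<Phi> \<tau> s) ** \<Phi> s 0 - M \<tau> ** \<Phi> \<tau> 0) (at \<tau> within {0..T})"
      using that by (intro has_vector_derivative_diff has_vd_mmr PhiD s zero0)
    then show ?thesis by (simp add: mdl matrix_mul_assoc)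
  qed
  have B: "norm (M \<tau> ** ?X \<tau>) \<le> LM * norm (?X \<tau>)" if "\<tau> \<in> {0..T}" for \<tau>
    using that by (rule Mbound)
  have ss: "\<Phi> s s = mat 1" by (rule Phi1[OF s])
  have "?X s = 0" using ss by simp
  then have "?X t = 0" by (intro ode_zero[OF D B LM s _ t]) auto
  then show ?thesis by simp
qed

lemma LamPsi: "s \<in> {0..T} \<Longrightarrow> \<Lambda> s ** \<Psi> s = mat 1"
  unfolding \<Lambda>_def \<Psi>_def using cocycle[OF _ zero0, of s] Phi1[OF zero0] by simp

lemma PsiLam: "s \<in> {0..T} \<Longrightarrow> \<Psi> s ** \<Lambda> s = mat 1"
  using LamPsi matrix_left_right_inverse by blast

lemma Phi_split: assumes "s \<in> {0..T}" "t \<in> {0..T}" shows "\<Phi> t s = \<Psi> t ** \<Lambda> s"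
proof -
  have "\<Phi> t s = \<Phi> t s ** (\<Psi> s ** \<Lambda> s)" using PsiLam[OF assms(1)] by simp
  also have "\<dots> = (\<Phi> t s ** \<Phi> s 0) ** \<Lambda> s" by (simp add: matrix_mul_assoc \<Psi>_def)
  also have "\<dots> = \<Psi> t ** \<Lambda> s" using cocycle[OF assms] by (simp add: \<Psi>_def)
  finally show ?thesis .
qed

definition "CB = norm (mat 1::real^'n^'n) * exp (LM * T)"

lemma Phi_bound: assumes s: "s \<in> {0..T}" and t: "t \<in> {0..T}" shows "norm (\<Phi> t s) \<le> CB"
proof -
  have D: "((\<lambda>\<tau>. \<Phi> \<tau> s) has_vector_derivative M \<tau> ** \<Phi> \<tau> s) (at \<tau> within {0..T})" if "\<tau> \<in> {0..T}" for \<tau>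
    using PhiD[OF s that] .
  have B: "norm (M \<tau> ** \<Phi> \<tau> s) \<le> LM * norm (\<Phi> \<tau> s)" if "\<tau> \<in> {0..T}" for \<tau>
    using that by (rule Mbound)
  have "norm (\<Phi> t s) \<le> norm (\<Phi> s s) * exp (LM * \<bar>t - s\<bar>)"
    by (rule growth[OF D B LM s t])
  also have "\<dots> \<le> CB" unfolding CB_def Phi1[OF s]
    using s t LM by (intro mult_left_mono) (auto intro!: mult_left_mono)
  finally show ?thesis .
qed

lemma CB_nonneg: "0 \<le> CB" unfolding CB_def by simp

lemma Psi_cont: "continuous_on {0..T} \<Psi>"
  unfolding \<Psi>_def by (rule deriv_cont_on[OF PhiD[OF zero0]])

lemma Lam_diff: assumes s: "s \<in> {0..T}" and u: "u \<in> {0..T}"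
  shows "\<Lambda> u - \<Lambda> s = \<Lambda> u ** (\<Psi> s - \<Psi> u) ** \<Lambda> s"
  by (simp add: mdl mdr matrix_mul_assoc[symmetric] PsiLam[OF s]) (simp add: matrix_mul_assoc LamPsi[OF u])

lemma Lam_cont: "continuous_on {0..T} \<Lambda>"
  unfolding continuous_on_iff
proof (intro ballI allI impI)
  fix x e assume x: "x \<in> {0..T}" and e: "(0::real) < e"
  define e' where "e' = e / (CB * CB + 1)"
  have e': "0 < e'" using e unfolding e'_def by (simp add: add_nonneg_pos)
  obtain d where d: "d > 0" "\<forall>x'\<in>{0..T}. dist x' x < d \<longrightarrow> dist (\<Psi> x') (\<Psi> x) < e'"
    using Psi_cont x e' unfolding continuous_on_iff by blast
  show "\<exists>d>0. \<forall>x'\<in>{0..T}. dist x' x < d \<longrightarrow> dist (\<Lambda> x') (\<Lambda> x) < e"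
  proof (intro exI conjI ballI impI, fact d(1))
    fix x' assume x': "x' \<in> {0..T}" and dx: "dist x' x < d"
    have "dist (\<Lambda> x') (\<Lambda> x) = norm (\<Lambda> x' ** (\<Psi> x - \<Psi> x') ** \<Lambda> x)"
      by (simp add: dist_norm Lam_diff[OF x x'])
    also have "\<dots> \<le> norm (\<Lambda> x') * norm (\<Psi> x - \<Psi> x') * norm (\<Lambda> x)"
      by (meson norm_mm mult_right_mono norm_ge_zero order_trans)
    also have "\<dots> \<le> CB * dist (\<Psi> x') (\<Psi> x) * CB"
      using Phi_bound[OF x' zero0] Phi_bound[OF x zero0] CB_nonneg
      unfolding \<Lambda>_def by (intro mult_mono) (auto simp: dist_norm norm_minus_commute)
    also have "\<dots> \<le> CB * e' * CB"
      using d(2) x' dx CB_nonneg e' by (intro mult_mono) auto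
    also have "\<dots> < e"
    proof -
      have c: "0 \<le> CB * CB" by simp
      have "CB * e' * CB = e * (CB * CB) / (CB * CB + 1)" unfolding e'_def by (simp add: field_simps)
      have c': "0 < CB * CB + 1" using c by linarith
      have "e * (CB * CB) / (CB * CB + 1) < e \<longleftrightarrow> e * (CB * CB) < e * (CB * CB + 1)" by (rule pos_divide_less_eq[OF c'])
      also have "\<dots>" using e by (simp add: algebra_simps)
      finally have "e * (CB * CB) / (CB * CB + 1) < e" .
      with \<open>CB * e' * CB = _\<close> show ?thesis by simp
    qed
    finally show "dist (\<Lambda> x') (\<Lambda> x) < e" .
  qed
qed

end


lemma mv_neg: "(A::real^'n^'m) *v (- x) = - (A *v x)"
  by (simp add: vec_eq_iff matrix_vector_mult_def sum_negf)

lemma mv_neg_left: "(- (A::real^'n^'m)) *v x = - (A *v x)"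
  by (simp add: vec_eq_iff matrix_vector_mult_def sum_negf)

lemma back_duhamel:
  fixes U C :: "real \<Rightarrow> real^'n^'n" and x g :: "real \<Rightarrow> real^'n"
  assumes rT: "r \<le> T"
    and dU: "\<And>s. s \<in> {r..T} \<Longrightarrow> (U has_vector_derivative (U s ** C s)) (at s within {r..T})"
    and dx: "\<And>s. s \<in> {r..T} \<Longrightarrow> (x has_vector_derivative (- (C s *v x s) + g s)) (at s within {r..T})"
    and xT: "x T = 0" and Ur: "U r = mat 1"
  shows "((\<lambda>s. U s *v g s) has_integral (- x r)) {r..T}"
proof -
  have "((\<lambda>s. U s *v x s) has_vector_derivative U s *v g s) (at s within {r..T})" if "s \<in> {r..T}" for s
  proof -
    have "((\<lambda>s. U s *v x s) has_vector_derivative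
        U s *v (- (C s *v x s) + g s) + (U s ** C s) *v x s) (at s within {r..T})"
      by (rule bounded_bilinear.has_vector_derivative[OF bb_mv dU[OF that] dx[OF that]])
    then show ?thesis
      by (simp add: matrix_vector_mult_diff_distrib matrix_vector_right_distrib mv_neg matrix_vector_mul_assoc)
  qed
  from fundamental_theorem_of_calculus[OF rT this]
  show ?thesis using xT Ur by simp
qed

context fund begin

lemma Psi_fun: "\<Psi> = (\<lambda>t. \<Phi> t 0)" by (simp add: fun_eq_iff \<Psi>_def)

lemma fwd_duhamel:
  assumes dm: "\<And>t. t \<in> {0..T} \<Longrightarrow> (m has_vector_derivative (M t *v m t + f t)) (at t within {0..T})"
    and m0: "m 0 = 0" and cf: "continuous_on {0..T} f" and t: "t \<in> {0..T}"
  shows "((\<lambda>s. \<Phi> t s *v f s) has_integral m t) {0..t}"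
proof -
  define g where "g s = \<Lambda> s *v f s" for s
  have cg: "continuous_on {0..T} g" unfolding g_def
    by (rule bounded_bilinear.continuous_on[OF bb_mv Lam_cont cf])
  define I where "I u = integral {0..u} g" for u
  define w where "w u = \<Psi> u *v I u" for u
  have dw: "(w has_vector_derivative (M u *v w u + f u)) (at u within {0..T})" if u: "u \<in> {0..T}" for u
  proof -
    have dI: "(I has_vector_derivative g u) (at u within {0..T})"
      unfolding I_def by (rule integral_has_vector_derivative[OF cg u])
    have dP: "(\<Psi> has_vector_derivative M u ** \<Psi> u) (at u within {0..T})"
      unfolding Psi_fun using PhiD[OF zero0 u] by simp
    have "(w has_vector_derivative (\<Psi> u *v g u + (M u ** \<Psi> u) *v I u)) (at u within {0..T})"
      unfolding w_def[abs_def] by (rule bounded_bilinear.has_vector_derivative[OF bb_mv dP dI])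
    moreover have "\<Psi> u *v g u = f u" unfolding g_def
      by (simp add: matrix_vector_mul_assoc PsiLam[OF u])
    moreover have "(M u ** \<Psi> u) *v I u = M u *v w u"
      by (simp add: w_def matrix_vector_mul_assoc)
    ultimately show ?thesis by (simp add: add.commute)
  qed
  have dz: "((\<lambda>u. m u - w u) has_vector_derivative (M u *v (m u - w u))) (at u within {0..T})"
    if u: "u \<in> {0..T}" for u
    using has_vector_derivative_diff[OF dm[OF u] dw[OF u]] by (simp add: matrix_vector_mult_diff_distrib)
  have bz: "norm (M u *v (m u - w u)) \<le> LM * norm (m u - w u)" if u: "u \<in> {0..T}" for u
    by (meson Mb[OF u] mult_right_mono norm_ge_zero norm_mv order_trans)
  have "m 0 - w 0 = 0" by (simp add: m0 w_def I_def)
  then have "m t - w t = 0" by (intro ode_zero[OF dz bz LM zero0 _ t]) auto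
  then have mt: "m t = \<Psi> t *v I t" by (simp add: w_def)
  have "g integrable_on {0..t}"
    by (rule integrable_continuous_interval, rule continuous_on_subset[OF cg]) (use t in auto)
  then have "(g has_integral I t) {0..t}" unfolding I_def by (simp add: has_integral_integral)
  then have "((\<lambda>s. \<Psi> t *v g s) has_integral (\<Psi> t *v I t)) {0..t}"
    using has_integral_linear[OF _ bounded_bilinear.bounded_linear_right[OF bb_mv]] by (auto simp: o_def)
  then show ?thesis unfolding mt
  proof (rule has_integral_eq[rotated])
    fix s assume "s \<in> {0..t}"
    then have "s \<in> {0..T}" using t by auto
    then show "\<Psi> t *v g s = \<Phi> t s *v f s"
      by (simp add: g_def Phi_split[OF _ t] matrix_vector_mul_assoc)
  qed
qed

lemma adj_duhamel:
  assumes r: "r \<in> {0..T}"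
    and dp: "\<And>s. s \<in> {0..T} \<Longrightarrow> (p has_vector_derivative (- (transpose (M s) *v p s) + g s)) (at s within {0..T})"
    and pT: "p T = 0"
  shows "((\<lambda>s. transpose (\<Phi> s r) *v g s) has_integral (- p r)) {r..T}"
proof (rule back_duhamel[where C = "\<lambda>s. transpose (M s)"])
  show "r \<le> T" using r by auto
  fix s assume s: "s \<in> {r..T}"
  then have s': "s \<in> {0..T}" using r by auto
  have "((\<lambda>s. transpose (\<Phi> s r)) has_vector_derivative transpose (M s ** \<Phi> s r)) (at s within {0..T})"
    by (rule bounded_linear.has_vector_derivative[OF bl_transpose PhiD[OF r s']])
  then have "((\<lambda>s. transpose (\<Phi> s r)) has_vector_derivative transpose (\<Phi> s r) ** transpose (M s)) (at s within {0..T})"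
    by (simp add: matrix_transpose_mul)
  then show "((\<lambda>s. transpose (\<Phi> s r)) has_vector_derivative transpose (\<Phi> s r) ** transpose (M s)) (at s within {r..T})"
    by (rule has_vector_derivative_within_subset) (use r in auto)
  show "(p has_vector_derivative - (transpose (M s) *v p s) + g s) (at s within {r..T})"
    by (rule has_vector_derivative_within_subset[OF dp[OF s']]) (use r in auto)
qed (use pT Phi1[OF r] in auto)

end


lemma transpose_add: "transpose ((A::real^'n^'m) + B) = transpose A + transpose B"
  by (simp add: transpose_def vec_eq_iff)
lemma transpose_diff: "transpose ((A::real^'n^'m) - B) = transpose A - transpose B"
  by (simp add: transpose_def vec_eq_iff)
lemma transpose_neg: "transpose (- (A::real^'n^'m)) = - transpose A"
  by (simp add: transpose_def vec_eq_iff)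
lemma scaleR_mv_left: "(c *\<^sub>R (A::real^'n^'m)) *v x = c *\<^sub>R (A *v x)"
  by (simp add: vec_eq_iff matrix_vector_mult_def sum_distrib_left mult.assoc)
lemma mat1_minus_mv: "(mat 1 - (G::real^'n^'n)) *v x = x - G *v x"
  by (simp add: matrix_vector_mult_diff_rdistrib)

lemmas mvs = matrix_vector_mult_add_rdistrib matrix_vector_mult_diff_rdistrib matrix_vector_right_distrib
  matrix_vector_mult_diff_distrib matrix_vector_mul_assoc[symmetric] mv_neg mv_neg_left matrix_vector_mult_scaleR
  scaleR_mv_left transpose_add transpose_diff transpose_scalar transpose_neg matrix_transpose_mul

lemma deriv_phi:
  fixes A G \<Gamma> Q N :: "real^'n^'n" and K :: "real \<Rightarrow> real^'n^'n" and m p y :: "real \<Rightarrow> real^'n"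
  assumes dp: "(p has_vector_derivative (- (transpose (A + G) *v p t) - (transpose (mat 1 - \<Gamma>) ** Q) *v (m t - (\<Gamma> *v m t + 0)))) (at t within S)"
    and dm: "(m has_vector_derivative ((A + G) *v m t + N *v y t + \<gamma> *\<^sub>R p t)) (at t within S)"
    and dK: "(K has_vector_derivative (- (K t ** (A + G)) - transpose (A + G) ** K t + \<gamma> *\<^sub>R (K t ** K t)
              + transpose (mat 1 - \<Gamma>) ** Q ** (mat 1 - \<Gamma>))) (at t within S)"
    and Ks: "transpose (K t) = K t"
  shows "((\<lambda>t. p t + K t *v m t) has_vector_derivative
           (- (transpose (A + G - \<gamma> *\<^sub>R K t) *v (p t + K t *v m t)) + K t *v (N *v y t))) (at t within S)"
proof -
  have "((\<lambda>t. p t + K t *v m t) has_vector_derivative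
       (- (transpose (A + G) *v p t) - (transpose (mat 1 - \<Gamma>) ** Q) *v (m t - (\<Gamma> *v m t + 0)))
       + (K t *v ((A + G) *v m t + N *v y t + \<gamma> *\<^sub>R p t)
          + (- (K t ** (A + G)) - transpose (A + G) ** K t + \<gamma> *\<^sub>R (K t ** K t)
              + transpose (mat 1 - \<Gamma>) ** Q ** (mat 1 - \<Gamma>)) *v m t)) (at t within S)"
    by (intro has_vector_derivative_add dp bounded_bilinear.has_vector_derivative[OF bb_mv dK dm])
  moreover have "(- (transpose (A + G) *v p t) - (transpose (mat 1 - \<Gamma>) ** Q) *v (m t - (\<Gamma> *v m t + 0)))
       + (K t *v ((A + G) *v m t + N *v y t + \<gamma> *\<^sub>R p t)
          + (- (K t ** (A + G)) - transpose (A + G) ** K t + \<gamma> *\<^sub>R (K t ** K t)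
              + transpose (mat 1 - \<Gamma>) ** Q ** (mat 1 - \<Gamma>)) *v m t)
     = - (transpose (A + G - \<gamma> *\<^sub>R K t) *v (p t + K t *v m t)) + K t *v (N *v y t)"
    using Ks by (simp add: mvs del: transpose_matrix_vector)
  ultimately show ?thesis by simp
qed
lemma cont_bound:
  fixes f :: "real \<Rightarrow> 'a::real_normed_vector"
  assumes "continuous_on {a..b} f"
  obtains B where "B \<ge> 0" "\<And>x. x \<in> {a..b} \<Longrightarrow> norm (f x) \<le> B"
proof -
  have "bounded (f ` {a..b})" by (rule compact_imp_bounded[OF compact_continuous_image[OF assms compact_Icc]])
  then obtain B where "B > 0" "\<forall>y\<in>f ` {a..b}. norm y \<le> B" by (auto simp: bounded_pos)
  then show ?thesis using that[of B] by auto
qed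

lemma E_cont0: "continuous_on S (\<lambda>\<tau>. mexp (\<tau> *\<^sub>R (A::real^'n^'n)))"
  by (rule continuous_at_imp_continuous_on) (auto intro: has_vector_derivative_continuous[OF mexp_deriv])

lemma E_cont: "continuous_on S (\<lambda>s. mexp ((s - t) *\<^sub>R (A::real^'n^'n)))"
  by (rule continuous_on_compose2[OF E_cont0[of UNIV]]) (auto intro!: continuous_intros)

lemma mexp_shift_deriv:
  "((\<lambda>s. mexp ((s - c) *\<^sub>R A)) has_vector_derivative ((A::real^'n^'n) ** mexp ((s - c) *\<^sub>R A))) (at s within S)"
proof -
  have "((\<lambda>s. s - c) has_vector_derivative 1) (at s within S)"
    by (auto intro!: derivative_eq_intros simp: has_real_derivative_iff_has_vector_derivative[symmetric])
  from vector_diff_chain_within[OF this mexp_deriv']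
  show ?thesis by (simp add: o_def)
qed

lemma mexp0: "mexp (0::real^'n^'n) = mat 1"
  using mexp_zero[of "0::real^'n^'n"] by simp

lemma norm_tmv: "norm (transpose X *v v) \<le> norm (X::real^'n^'m) * norm (v::real^'m)"
  using norm_mv[of "transpose X" v] by (simp only: norm_transpose)

lemma integral_cmul_real: "integral S (\<lambda>x. c * f x) = c * integral S (f::_\<Rightarrow>real)"
  using integral_cmul[of S c f] by simp


lemma homog_zero:
  fixes A G \<Gamma> Q N :: "real^'n^'n" and K :: "real \<Rightarrow> real^'n^'n" and \<Phi> :: "real \<Rightarrow> real \<Rightarrow> real^'n^'n"
    and m p y :: "real \<Rightarrow> real^'n" and \<gamma> T :: real
  assumes T: "T > 0" and \<gamma>: "\<gamma> > 0"
    and dK: "\<And>t. t \<in> {0..T} \<Longrightarrow> (K has_vector_derivative (- (K t ** (A + G)) - transpose (A + G) ** K t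
              + \<gamma> *\<^sub>R (K t ** K t) + transpose (mat 1 - \<Gamma>) ** Q ** (mat 1 - \<Gamma>))) (at t within {0..T})"
    and KT: "K T = 0"
    and Ks: "\<And>t. t \<in> {0..T} \<Longrightarrow> transpose (K t) = K t"
    and Phi: "fundamental_matrix A G \<gamma> K T \<Phi>"
    and small: "(SUP ts\<in>{0..T}\<times>{0..T}. norm (\<Phi> (fst ts) (snd ts)))
                * norm N * norm (Q ** (mat 1 - \<Gamma>))
                * ((SUP t\<in>{0..T}. integral {t..T} (\<lambda>s. norm (mexp ((s - t) *\<^sub>R A)) * s))
                   + \<gamma> * (SUP t\<in>{0..T}. norm (K t))
                       * (SUP ts\<in>{0..T}\<times>{0..T}. norm (\<Phi> (fst ts) (snd ts)))
                       * (SUP t\<in>{0..T}. integral {t..T}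
                            (\<lambda>s. norm (mexp ((s - t) *\<^sub>R A)) * (T * s - s\<^sup>2 / 2))))
                < 1"
    and dm: "\<And>t. t \<in> {0..T} \<Longrightarrow> (m has_vector_derivative ((A + G) *v m t + N *v y t + \<gamma> *\<^sub>R p t)) (at t within {0..T})"
    and dp: "\<And>t. t \<in> {0..T} \<Longrightarrow> (p has_vector_derivative (- (transpose (A + G) *v p t)
              - (transpose (mat 1 - \<Gamma>) ** Q) *v (m t - (\<Gamma> *v m t + 0)))) (at t within {0..T})"
    and dy: "\<And>t. t \<in> {0..T} \<Longrightarrow> (y has_vector_derivative (- (transpose A *v y t)
              + Q *v (m t - (\<Gamma> *v m t + 0)))) (at t within {0..T})"
    and m0: "m 0 = 0" and pT: "p T = 0" and yT: "y T = 0"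
  shows "\<forall>t\<in>{0..T}. m t = 0 \<and> p t = 0 \<and> y t = 0"
proof -
  define c1 where "c1 = (SUP t\<in>{0..T}. norm (K t))"
  define c2 where "c2 = (SUP ts\<in>{0..T}\<times>{0..T}. norm (\<Phi> (fst ts) (snd ts)))"
  define I1 where "I1 t = integral {t..T} (\<lambda>s. norm (mexp ((s - t) *\<^sub>R A)) * s)" for t
  define I2 where "I2 t = integral {t..T} (\<lambda>s. norm (mexp ((s - t) *\<^sub>R A)) * (T * s - s\<^sup>2 / 2))" for t
  define c3 where "c3 = (SUP t\<in>{0..T}. I1 t)"
  define c4 where "c4 = (SUP t\<in>{0..T}. I2 t)"
  define nN where "nN = norm N"
  define Qp where "Qp = Q ** (mat 1 - \<Gamma>)"
  define nQ where "nQ = norm Qp"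
  have small': "c2 * nN * nQ * (c3 + \<gamma> * c1 * c2 * c4) < 1"
    using small unfolding c1_def c2_def c3_def c4_def nN_def nQ_def Qp_def I1_def I2_def .
  have T0: "0 \<in> {0..T}" "T \<in> {0..T}" using T by auto
  have cK: "continuous_on {0..T} K" by (rule deriv_cont_on[OF dK])
  obtain KB where KB: "KB \<ge> 0" "\<And>t. t \<in> {0..T} \<Longrightarrow> norm (K t) \<le> KB" using cont_bound[OF cK] by blast
  have c1: "norm (K t) \<le> c1" if "t \<in> {0..T}" for t
    unfolding c1_def by (rule cSUP_upper[OF that]) (use KB in \<open>auto intro!: bdd_aboveI2[where M=KB]\<close>)
  have c1nn: "0 \<le> c1" using c1[OF T0(1)] norm_ge_zero order_trans by blast
  define M where "M t = A + G - \<gamma> *\<^sub>R K t" for t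
  define LM where "LM = norm (A + G) + \<gamma> * KB"
  interpret F: fund M \<Phi> T LM
  proof
    show "0 < T" by fact
    show "0 \<le> LM" unfolding LM_def using KB \<gamma> by simp
  next
    fix t :: real assume t: "t \<in> {0..T}"
    have "norm (M t) \<le> norm (A + G) + norm (\<gamma> *\<^sub>R K t)" unfolding M_def by (rule norm_triangle_ineq4)
    also have "\<dots> \<le> norm (A + G) + \<gamma> * KB" using KB(2)[OF t] \<gamma> by (simp add: mult_left_mono)
    finally show "norm (M t) \<le> LM" unfolding LM_def .
  next
    fix s :: real assume "s \<in> {0..T}" then show "\<Phi> s s = mat 1" using Phi unfolding fundamental_matrix_def by auto
  next
    fix s t :: real assume "s \<in> {0..T}" "t \<in> {0..T}"
    then show "((\<lambda>\<tau>. \<Phi> \<tau> s) has_vector_derivative M t ** \<Phi> t s) (at t within {0..T})"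
      using Phi unfolding fundamental_matrix_def M_def by auto
  qed
  have c2: "norm (\<Phi> t s) \<le> c2" if "t \<in> {0..T}" "s \<in> {0..T}" for t s
  proof -
    have "norm (\<Phi> (fst (t,s)) (snd (t,s))) \<le> c2" unfolding c2_def
      by (rule cSUP_upper) (use that F.Phi_bound in \<open>auto intro!: bdd_aboveI2[where M=F.CB]\<close>)
    then show ?thesis by simp
  qed
  have c2nn: "0 \<le> c2" using c2[OF T0(1) T0(1)] norm_ge_zero order_trans by blast
  obtain EB where EB: "EB \<ge> 0" "\<And>\<tau>. \<tau> \<in> {0..T} \<Longrightarrow> norm (mexp (\<tau> *\<^sub>R A)) \<le> EB"
    using cont_bound[OF E_cont0[of "{0..T}" A]] by blast
  have int1: "(\<lambda>s. norm (mexp ((s - t) *\<^sub>R A)) * s) integrable_on {t..T}" for t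
    by (intro integrable_continuous_interval continuous_intros E_cont)
  have int2: "(\<lambda>s. norm (mexp ((s - t) *\<^sub>R A)) * (T * s - s\<^sup>2 / 2)) integrable_on {t..T}" for t
    by (intro integrable_continuous_interval continuous_intros E_cont) auto
  have I1c3: "I1 t \<le> c3" if t: "t \<in> {0..T}" for t
    unfolding c3_def
  proof (rule cSUP_upper[OF t], rule bdd_aboveI2)
    fix t assume t: "t \<in> {0..T}"
    have "norm (I1 t) \<le> (EB * T) * Henstock_Kurzweil_Integration.content {t..T}" unfolding I1_def
    proof (rule has_integral_bound_real[OF _ finite.emptyI int1[unfolded has_integral_integral]])
      show "0 \<le> EB * T" using EB T by simp
      fix s assume "s \<in> {t..T} - {}"
      then have s: "0 \<le> s" "s \<le> T" "s - t \<in> {0..T}" using t by auto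
      show "norm (norm (mexp ((s - t) *\<^sub>R A)) * s) \<le> EB * T"
        using EB(2)[OF s(3)] s EB(1) by (simp add: abs_of_nonneg mult_mono)
    qed
    also have "\<dots> \<le> EB * T * T" using t EB T by (simp add: content_real mult_left_mono)
    finally show "I1 t \<le> EB * T * T" by simp
  qed
  have I2c4: "I2 t \<le> c4" if t: "t \<in> {0..T}" for t
    unfolding c4_def
  proof (rule cSUP_upper[OF t], rule bdd_aboveI2)
    fix t assume t: "t \<in> {0..T}"
    have "norm (I2 t) \<le> (EB * (T * T)) * Henstock_Kurzweil_Integration.content {t..T}" unfolding I2_def
    proof (rule has_integral_bound_real[OF _ finite.emptyI int2[unfolded has_integral_integral]])
      show "0 \<le> EB * (T * T)" using EB T by simp
      fix s assume "s \<in> {t..T} - {}"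
      then have s: "0 \<le> s" "s \<le> T" "s - t \<in> {0..T}" using t by auto
      have "\<bar>T * s - s\<^sup>2 / 2\<bar> \<le> T * T"
      proof -
        have "s * s \<le> T * s" using s by (simp add: mult_right_mono)
        moreover have "T * s \<le> T * T" using s T by (simp add: mult_left_mono)
        moreover have "0 \<le> s * s" "0 \<le> T * T" by simp_all
        ultimately show ?thesis unfolding power2_eq_square abs_le_iff by linarith
      qed
      then show "norm (norm (mexp ((s - t) *\<^sub>R A)) * (T * s - s\<^sup>2 / 2)) \<le> EB * (T * T)"
        using EB(2)[OF s(3)] EB(1) by (simp add: abs_mult) (rule mult_mono, auto)
    qed
    also have "\<dots> \<le> EB * (T * T) * T" using t EB T by (simp add: content_real mult_left_mono)
    finally show "I2 t \<le> EB * (T * T) * T" by simp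
  qed
  define \<phi> where "\<phi> t = p t + K t *v m t" for t
  have d\<phi>: "(\<phi> has_vector_derivative (- (transpose (M t) *v \<phi> t) + K t *v (N *v y t))) (at t within {0..T})"
    if t: "t \<in> {0..T}" for t
    unfolding \<phi>_def[abs_def] M_def using deriv_phi[where A=A and G=G and \<Gamma>=\<Gamma> and Q=Q and N=N and K=K and m=m and p=p and y=y and t=t and \<gamma>=\<gamma> and S="{0..T}", OF dp[OF t] dm[OF t] dK[OF t] Ks[OF t]] .
  have dm': "(m has_vector_derivative (M t *v m t + (N *v y t + \<gamma> *\<^sub>R \<phi> t))) (at t within {0..T})"
    if t: "t \<in> {0..T}" for t
  proof -
    have e: "(A + G) *v m t + N *v y t + \<gamma> *\<^sub>R p t = M t *v m t + (N *v y t + \<gamma> *\<^sub>R \<phi> t)"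
      unfolding M_def \<phi>_def by (simp add: mvs del: transpose_matrix_vector) (simp add: algebra_simps)
    from dm[OF t] show ?thesis unfolding e .
  qed
  have dy': "(y has_vector_derivative (- (transpose A *v y t) + Qp *v m t)) (at t within {0..T})"
    if t: "t \<in> {0..T}" for t
  proof -
    have e: "Q *v (m t - (\<Gamma> *v m t + 0)) = Qp *v m t"
      unfolding Qp_def by (simp add: mvs del: transpose_matrix_vector)
    from dy[OF t] show ?thesis unfolding e .
  qed
  have \<phi>T: "\<phi> T = 0" unfolding \<phi>_def using pT KT by simp
  have cm: "continuous_on {0..T} m" by (rule deriv_cont_on[OF dm])
  have cy: "continuous_on {0..T} y" by (rule deriv_cont_on[OF dy])
  have c\<phi>: "continuous_on {0..T} \<phi>" by (rule deriv_cont_on[OF d\<phi>])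
  have cf: "continuous_on {0..T} (\<lambda>s. N *v y s + \<gamma> *\<^sub>R \<phi> s)"
    by (intro continuous_intros bounded_bilinear.continuous_on[OF bb_mv] cy c\<phi>)
  have Rm: "((\<lambda>s. \<Phi> t s *v (N *v y s + \<gamma> *\<^sub>R \<phi> s)) has_integral m t) {0..t}" if t: "t \<in> {0..T}" for t
    by (rule F.fwd_duhamel[OF dm' m0 cf t])
  have R\<phi>: "((\<lambda>s. transpose (\<Phi> s r) *v (K s *v (N *v y s))) has_integral (- \<phi> r)) {r..T}" if r: "r \<in> {0..T}" for r
    by (rule F.adj_duhamel[OF r d\<phi> \<phi>T])
  have Ry: "((\<lambda>s. transpose (mexp ((s - t) *\<^sub>R A)) *v (Qp *v m s)) has_integral (- y t)) {t..T}"
    if t: "t \<in> {0..T}" for t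
  proof (rule back_duhamel[where C = "\<lambda>s. transpose A"])
    show "t \<le> T" using t by auto
    fix s assume s: "s \<in> {t..T}"
    have "((\<lambda>s. transpose (mexp ((s - t) *\<^sub>R A))) has_vector_derivative transpose (A ** mexp ((s - t) *\<^sub>R A))) (at s within {t..T})"
      by (rule bounded_linear.has_vector_derivative[OF bl_transpose mexp_shift_deriv])
    then show "((\<lambda>s. transpose (mexp ((s - t) *\<^sub>R A))) has_vector_derivative transpose (mexp ((s - t) *\<^sub>R A)) ** transpose A) (at s within {t..T})"
      by (simp add: matrix_transpose_mul)
    have s': "s \<in> {0..T}" using s t by auto
    show "(y has_vector_derivative - (transpose A *v y s) + Qp *v m s) (at s within {t..T})"
      by (rule has_vector_derivative_within_subset[OF dy'[OF s']]) (use t in auto)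
  qed (use yT in \<open>auto simp: mexp0\<close>)
  obtain YB where YB: "YB \<ge> 0" "\<And>t. t \<in> {0..T} \<Longrightarrow> norm (y t) \<le> YB" using cont_bound[OF cy] by blast
  define Y where "Y = (SUP t\<in>{0..T}. norm (y t))"
  have Yb: "norm (y t) \<le> Y" if "t \<in> {0..T}" for t
    unfolding Y_def by (rule cSUP_upper[OF that]) (use YB in \<open>auto intro!: bdd_aboveI2[where M=YB]\<close>)
  have Ynn: "0 \<le> Y" using Yb[OF T0(1)] norm_ge_zero order_trans by blast
  have nNnn: "0 \<le> nN" "0 \<le> nQ" unfolding nN_def nQ_def by simp_all
  have \<phi>b: "norm (\<phi> r) \<le> c2 * c1 * nN * Y * (T - r)" if r: "r \<in> {0..T}" for r
  proof -
    have "norm (- \<phi> r) \<le> (c2 * c1 * nN * Y) * Henstock_Kurzweil_Integration.content {r..T}"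
    proof (rule has_integral_bound_real[OF _ finite.emptyI R\<phi>[OF r]])
      show "0 \<le> c2 * c1 * nN * Y" using c2nn c1nn nNnn Ynn by simp
      fix s assume "s \<in> {r..T} - {}"
      then have s: "s \<in> {0..T}" using r by auto
      have "norm (transpose (\<Phi> s r) *v (K s *v (N *v y s))) \<le> norm (\<Phi> s r) * norm (K s *v (N *v y s))"
        by (rule norm_tmv)
      also have "\<dots> \<le> norm (\<Phi> s r) * (norm (K s) * (norm N * norm (y s)))"
        by (intro mult_left_mono order_trans[OF norm_mv] norm_mv norm_ge_zero) simp
      also have "\<dots> \<le> c2 * (c1 * (nN * Y))" unfolding nN_def
        using c2[OF s r] c1[OF s] Yb[OF s] c1nn c2nn Ynn
        by (intro mult_mono) auto
      finally show "norm (transpose (\<Phi> s r) *v (K s *v (N *v y s))) \<le> c2 * c1 * nN * Y"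
        by (simp add: mult_ac)
    qed
    then show ?thesis using r by (simp add: content_real)
  qed
  have mb: "norm (m t) \<le> c2 * nN * Y * (t + \<gamma> * c1 * c2 * (T * t - t\<^sup>2 / 2))" if t: "t \<in> {0..T}" for t
  proof -
    define a where "a = c2 * nN * Y"
    define b where "b = \<gamma> * c2 * (c2 * c1 * nN * Y)"
    have hint: "((\<lambda>s. a + b * (T - s)) has_integral ((a * t + b * (T * t - t\<^sup>2 / 2)) - (a * 0 + b * (T * 0 - 0\<^sup>2 / 2)))) {0..t}"
      using t by (intro fundamental_theorem_of_calculus)
        (auto intro!: derivative_eq_intros simp: has_real_derivative_iff_has_vector_derivative[symmetric] algebra_simps)
    have "norm (m t) = norm (integral {0..t} (\<lambda>s. \<Phi> t s *v (N *v y s + \<gamma> *\<^sub>R \<phi> s)))"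
      using Rm[OF t] by (simp add: integral_unique)
    also have "\<dots> \<le> integral {0..t} (\<lambda>s. a + b * (T - s))"
    proof (rule integral_norm_bound_integral)
      show "(\<lambda>s. \<Phi> t s *v (N *v y s + \<gamma> *\<^sub>R \<phi> s)) integrable_on {0..t}" using Rm[OF t] by blast
      show "(\<lambda>s. a + b * (T - s)) integrable_on {0..t}" using hint by blast
      fix s assume "s \<in> {0..t}"
      then have s: "s \<in> {0..T}" using t by auto
      have "norm (\<Phi> t s *v (N *v y s + \<gamma> *\<^sub>R \<phi> s)) \<le> norm (\<Phi> t s) * norm (N *v y s + \<gamma> *\<^sub>R \<phi> s)"
        by (rule norm_mv)
      also have "\<dots> \<le> norm (\<Phi> t s) * (norm N * norm (y s) + \<gamma> * norm (\<phi> s))"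
        using \<gamma> by (intro mult_left_mono order_trans[OF norm_triangle_ineq] add_mono norm_mv) auto
      also have "\<dots> \<le> c2 * (nN * Y + \<gamma> * (c2 * c1 * nN * Y * (T - s)))" unfolding nN_def
        using c2[OF t s] Yb[OF s] \<phi>b[OF s] \<gamma> c2nn nNnn Ynn unfolding nN_def
        by (intro mult_mono add_mono) auto
      also have "\<dots> = a + b * (T - s)" unfolding a_def b_def by (simp add: algebra_simps)
      finally show "norm (\<Phi> t s *v (N *v y s + \<gamma> *\<^sub>R \<phi> s)) \<le> a + b * (T - s)" .
    qed
    also have "\<dots> = a * t + b * (T * t - t\<^sup>2 / 2)" using integral_unique[OF hint] by simp
    finally show ?thesis unfolding a_def b_def by (simp add: algebra_simps)
  qed
  define \<kappa> where "\<kappa> = c2 * nN * nQ * (c3 + \<gamma> * c1 * c2 * c4)"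
  have yb: "norm (y t) \<le> \<kappa> * Y" if t: "t \<in> {0..T}" for t
  proof -
    define k where "k = nQ * (c2 * nN * Y)"
    define c where "c = \<gamma> * c1 * c2"
    have knn: "0 \<le> k" "0 \<le> c" unfolding k_def c_def using nNnn c2nn Ynn c1nn \<gamma> by simp_all
    define g where "g s = k * (norm (mexp ((s - t) *\<^sub>R A)) * s + c * (norm (mexp ((s - t) *\<^sub>R A)) * (T * s - s\<^sup>2 / 2)))" for s
    have "norm (y t) = norm (integral {t..T} (\<lambda>s. transpose (mexp ((s - t) *\<^sub>R A)) *v (Qp *v m s)))"
      using Ry[OF t] by (simp add: integral_unique)
    also have "\<dots> \<le> integral {t..T} g"
    proof (rule integral_norm_bound_integral)
      show "(\<lambda>s. transpose (mexp ((s - t) *\<^sub>R A)) *v (Qp *v m s)) integrable_on {t..T}" using Ry[OF t] by blast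
      show "g integrable_on {t..T}" unfolding g_def
        by (intro integrable_continuous_interval continuous_intros E_cont) auto
      fix s assume "s \<in> {t..T}"
      then have s: "s \<in> {0..T}" using t by auto
      have "norm (transpose (mexp ((s - t) *\<^sub>R A)) *v (Qp *v m s)) \<le> norm (mexp ((s - t) *\<^sub>R A)) * norm (Qp *v m s)"
        by (rule norm_tmv)
      also have "\<dots> \<le> norm (mexp ((s - t) *\<^sub>R A)) * (nQ * (c2 * nN * Y * (s + \<gamma> * c1 * c2 * (T * s - s\<^sup>2 / 2))))"
        unfolding nQ_def by (intro mult_left_mono order_trans[OF norm_mv] mb[OF s] norm_ge_zero)
      also have "\<dots> = g s" unfolding g_def k_def c_def by (simp add: algebra_simps)
      finally show "norm (transpose (mexp ((s - t) *\<^sub>R A)) *v (Qp *v m s)) \<le> g s" .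
    qed
    also have "integral {t..T} g = k * (I1 t + c * I2 t)"
    proof -
      have i2: "(\<lambda>s. c * (norm (mexp ((s - t) *\<^sub>R A)) * (T * s - s\<^sup>2 / 2))) integrable_on {t..T}"
        by (intro integrable_continuous_interval continuous_intros E_cont) auto
      show ?thesis unfolding g_def integral_cmul_real I1_def I2_def
        by (simp add: integral_add[OF int1 i2] integral_cmul_real)
    qed
    also have "\<dots> \<le> k * (c3 + c * c4)"
      using I1c3[OF t] I2c4[OF t] knn by (intro mult_left_mono add_mono) auto
    also have "\<dots> = \<kappa> * Y" unfolding k_def c_def \<kappa>_def by (simp add: algebra_simps)
    finally show ?thesis .
  qed
  have "Y \<le> \<kappa> * Y" unfolding Y_def[of] by (rule cSUP_least) (use T0 yb[unfolded Y_def] in auto)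
  then have Y0: "Y = 0"
  proof -
    assume a: "Y \<le> \<kappa> * Y"
    show "Y = 0"
    proof (rule ccontr)
      assume "Y \<noteq> 0" then have "Y > 0" using Ynn by simp
      then have "\<kappa> * Y < 1 * Y" using small' unfolding \<kappa>_def by (intro mult_strict_right_mono) auto
      with a show False by simp
    qed
  qed
  show ?thesis
  proof
    fix t assume t: "t \<in> {0..T}"
    have y0: "y t = 0" using Yb[OF t] Y0 by simp
    have \<phi>0: "\<phi> t = 0" using \<phi>b[OF t] Y0 by simp
    have m0': "m t = 0" using mb[OF t] Y0 by simp
    have "p t = \<phi> t - K t *v m t" unfolding \<phi>_def by simp
    then show "m t = 0 \<and> p t = 0 \<and> y t = 0" using y0 \<phi>0 m0' by simp
  qed
qed


definition mp :: "real^(('n::finite + ('n + 'n)) option) \<Rightarrow> real^'n" where "mp w = (\<chi> i. w $ Some (Inl i))"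
definition pp :: "real^(('n::finite + ('n + 'n)) option) \<Rightarrow> real^'n" where "pp w = (\<chi> i. w $ Some (Inr (Inl i)))"
definition yp :: "real^(('n::finite + ('n + 'n)) option) \<Rightarrow> real^'n" where "yp w = (\<chi> i. w $ Some (Inr (Inr i)))"
definition cp :: "real^(('n::finite + ('n + 'n)) option) \<Rightarrow> real" where "cp w = w $ None"

lemma lin_mp: "linear mp" by (rule linearI) (simp_all add: mp_def vec_eq_iff)
lemma lin_pp: "linear pp" by (rule linearI) (simp_all add: pp_def vec_eq_iff)
lemma lin_yp: "linear yp" by (rule linearI) (simp_all add: yp_def vec_eq_iff)
lemma lin_cp: "linear cp" by (rule linearI) (simp_all add: cp_def)

lemma comps_add: "mp (x + y) = mp x + mp y" "pp (x + y) = pp x + pp y" "yp (x + y) = yp x + yp y" "cp (x + y) = cp x + cp y"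
  by (simp_all add: mp_def pp_def yp_def cp_def vec_eq_iff)
lemma comps_scale: "mp (c *\<^sub>R x) = c *\<^sub>R mp x" "pp (c *\<^sub>R x) = c *\<^sub>R pp x" "yp (c *\<^sub>R x) = c *\<^sub>R yp x" "cp (c *\<^sub>R x) = c * cp x"
  by (simp_all add: mp_def pp_def yp_def cp_def vec_eq_iff)

definition Fop :: "real^('n::finite)^'n \<Rightarrow> real^'n^'n \<Rightarrow> real^'n^'n \<Rightarrow> real^'n^'n \<Rightarrow> real^'n^'n \<Rightarrow> real^'n \<Rightarrow> real
   \<Rightarrow> real^(('n + ('n + 'n)) option) \<Rightarrow> real^(('n + ('n + 'n)) option)" where
  "Fop A G \<Gamma> Q N \<eta> \<gamma> w = (\<chi> j. case j of None \<Rightarrow> 0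
     | Some (Inl i) \<Rightarrow> ((A + G) *v mp w + N *v yp w + \<gamma> *\<^sub>R pp w) $ i
     | Some (Inr (Inl i)) \<Rightarrow> (- (transpose (A + G) *v pp w)
            - (transpose (mat 1 - \<Gamma>) ** Q) *v (mp w - (\<Gamma> *v mp w + cp w *\<^sub>R \<eta>))) $ i
     | Some (Inr (Inr i)) \<Rightarrow> (- (transpose A *v yp w) + Q *v (mp w - (\<Gamma> *v mp w + cp w *\<^sub>R \<eta>))) $ i)"

lemma Fop_comps:
  "mp (Fop A G \<Gamma> Q N \<eta> \<gamma> w) = (A + G) *v mp w + N *v yp w + \<gamma> *\<^sub>R pp w"
  "pp (Fop A G \<Gamma> Q N \<eta> \<gamma> w) = - (transpose (A + G) *v pp w) - (transpose (mat 1 - \<Gamma>) ** Q) *v (mp w - (\<Gamma> *v mp w + cp w *\<^sub>R \<eta>))"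
  "yp (Fop A G \<Gamma> Q N \<eta> \<gamma> w) = - (transpose A *v yp w) + Q *v (mp w - (\<Gamma> *v mp w + cp w *\<^sub>R \<eta>))"
  "cp (Fop A G \<Gamma> Q N \<eta> \<gamma> w) = 0"
  by (simp_all add: Fop_def mp_def pp_def yp_def cp_def vec_eq_iff del: transpose_matrix_vector)

lemma vec_eq_comps: "w = w' \<longleftrightarrow> mp w = mp w' \<and> pp w = pp w' \<and> yp w = yp w' \<and> cp w = cp w'"
proof
  assume "mp w = mp w' \<and> pp w = pp w' \<and> yp w = yp w' \<and> cp w = cp w'"
  then have a: "\<forall>i. w $ Some (Inl i) = w' $ Some (Inl i)" "\<forall>i. w $ Some (Inr (Inl i)) = w' $ Some (Inr (Inl i))"
    "\<forall>i. w $ Some (Inr (Inr i)) = w' $ Some (Inr (Inr i))" "w $ None = w' $ None"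
    by (auto simp: mp_def pp_def yp_def cp_def vec_eq_iff)
  show "w = w'" unfolding vec_eq_iff
  proof
    fix j
    have b: "w $ Some (Inr k) = w' $ Some (Inr k)" for k using a by (cases k) auto
    have c: "w $ Some k = w' $ Some k" for k using a b by (cases k) auto
    show "w $ j = w' $ j" using a c by (cases j) auto
  qed
qed simp

lemma lin_Fop: "linear (Fop A G \<Gamma> Q N \<eta> \<gamma>)"
proof (rule linearI)
  fix x y and c :: real
  show "Fop A G \<Gamma> Q N \<eta> \<gamma> (x + y) = Fop A G \<Gamma> Q N \<eta> \<gamma> x + Fop A G \<Gamma> Q N \<eta> \<gamma> y"
    unfolding vec_eq_comps by (simp add: Fop_comps comps_add mvs scaleR_add_left del: transpose_matrix_vector) (simp add: algebra_simps)
  show "Fop A G \<Gamma> Q N \<eta> \<gamma> (c *\<^sub>R x) = c *\<^sub>R Fop A G \<Gamma> Q N \<eta> \<gamma> x"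
    unfolding vec_eq_comps by (simp add: Fop_comps comps_scale mvs del: transpose_matrix_vector) (simp add: algebra_simps)
qed

lemma bl_comps: "bounded_linear mp" "bounded_linear pp" "bounded_linear yp" "bounded_linear cp"
  using lin_mp lin_pp lin_yp lin_cp by (simp_all add: linear_conv_bounded_linear)

lemma comps_zero: "mp 0 = 0" "pp 0 = 0" "yp 0 = 0" "cp 0 = 0"
  by (simp_all add: mp_def pp_def yp_def cp_def vec_eq_iff)

lemma existence:
  fixes A G \<Gamma> Q N :: "real^'n^'n" and \<eta> m0 :: "real^'n" and \<gamma> T :: real
  assumes T: "T > 0"
  and uniq: "\<And>m p y. m 0 = 0 \<Longrightarrow> p T = 0 \<Longrightarrow> y T = 0 \<Longrightarrow>
        (\<And>t. t \<in> {0..T} \<Longrightarrow> (m has_vector_derivative ((A + G) *v m t + N *v y t + \<gamma> *\<^sub>R p t)) (at t within {0..T})) \<Longrightarrow>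
        (\<And>t. t \<in> {0..T} \<Longrightarrow> (p has_vector_derivative (- (transpose (A + G) *v p t) - (transpose (mat 1 - \<Gamma>) ** Q) *v (m t - (\<Gamma> *v m t + 0)))) (at t within {0..T})) \<Longrightarrow>
        (\<And>t. t \<in> {0..T} \<Longrightarrow> (y has_vector_derivative (- (transpose A *v y t) + Q *v (m t - (\<Gamma> *v m t + 0)))) (at t within {0..T})) \<Longrightarrow>
        \<forall>t\<in>{0..T}. m t = 0 \<and> p t = 0 \<and> y t = 0"
  shows "\<exists>m p y. m 0 = m0 \<and> p T = 0 \<and> y T = 0 \<and> (\<forall>t\<in>{0..T}.
        (m has_vector_derivative ((A + G) *v m t + N *v y t + \<gamma> *\<^sub>R p t)) (at t within {0..T}) \<and>
        (p has_vector_derivative (- (transpose (A + G) *v p t) - (transpose (mat 1 - \<Gamma>) ** Q) *v (m t - (\<Gamma> *v m t + \<eta>)))) (at t within {0..T}) \<and>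
        (y has_vector_derivative (- (transpose A *v y t) + Q *v (m t - (\<Gamma> *v m t + \<eta>)))) (at t within {0..T}))"
proof -
  define F where "F = Fop A G \<Gamma> Q N \<eta> \<gamma>"
  define MF where "MF = matrix F"
  have linF: "linear F" unfolding F_def by (rule lin_Fop)
  have MFw: "MF *v w = F w" for w unfolding MF_def using matrix_vector_mul(2)[OF linF] by (simp add: fun_eq_iff)
  define sol where "sol w t = mexp (t *\<^sub>R MF) *v w" for w t
  have dsol: "((\<lambda>t. sol w t) has_vector_derivative F (sol w t)) (at t within S)" for w t S
  proof -
    have "((\<lambda>t. mexp (t *\<^sub>R MF) *v w) has_vector_derivative (MF ** mexp (t *\<^sub>R MF)) *v w) (at t within S)"
      by (rule bounded_linear.has_vector_derivative[OF bounded_bilinear.bounded_linear_left[OF bb_mv] mexp_deriv'])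
    then show ?thesis unfolding sol_def by (simp add: matrix_vector_mul_assoc[symmetric] MFw)
  qed
  have sol0: "sol w 0 = w" for w unfolding sol_def by (simp add: mexp0)
  have dh: "((\<lambda>t. h (sol w t)) has_vector_derivative h (F (sol w t))) (at t within S)" if "bounded_linear h" for h w t S
    by (rule bounded_linear.has_vector_derivative[OF that dsol])
  have cconst: "cp (sol w t) = cp w" if t: "t \<in> {0..T}" for w t
  proof -
    have d: "((\<lambda>t. cp (sol w t) - cp w) has_vector_derivative 0) (at s within {0..T})" for s
      using has_vector_derivative_diff[OF dh[OF bl_comps(4)] has_vector_derivative_const[of "cp w"]]
      by (simp add: F_def Fop_comps)
    have z: "(\<lambda>t. cp (sol w t) - cp w) 0 = 0" using sol0 by simp
    have "(\<lambda>t. cp (sol w t) - cp w) t = 0"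
      by (rule ode_zero[where x'="\<lambda>s. 0" and L=0, OF d _ _ _ z t]) (use T in auto)
    then show ?thesis by simp
  qed
  have solT: "
        ((\<lambda>t. mp (sol w t)) has_vector_derivative ((A + G) *v mp (sol w t) + N *v yp (sol w t) + \<gamma> *\<^sub>R pp (sol w t))) (at t within {0..T}) \<and>
        ((\<lambda>t. pp (sol w t)) has_vector_derivative (- (transpose (A + G) *v pp (sol w t)) - (transpose (mat 1 - \<Gamma>) ** Q) *v (mp (sol w t) - (\<Gamma> *v mp (sol w t) + cp w *\<^sub>R \<eta>)))) (at t within {0..T}) \<and>
        ((\<lambda>t. yp (sol w t)) has_vector_derivative (- (transpose A *v yp (sol w t)) + Q *v (mp (sol w t) - (\<Gamma> *v mp (sol w t) + cp w *\<^sub>R \<eta>)))) (at t within {0..T})" if t: "t \<in> {0..T}" for w t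
  proof -
    have c: "cp (sol w t) = cp w" by (rule cconst[OF t])
    show ?thesis
      using dh[OF bl_comps(1), of w t "{0..T}"] dh[OF bl_comps(2), of w t "{0..T}"] dh[OF bl_comps(3), of w t "{0..T}"] c
      by (simp add: F_def Fop_comps del: transpose_matrix_vector)
  qed
  define Bd where "Bd w = (\<chi> j. case j of None \<Rightarrow> cp w | Some (Inl i) \<Rightarrow> mp w $ i
      | Some (Inr (Inl i)) \<Rightarrow> pp (sol w T) $ i | Some (Inr (Inr i)) \<Rightarrow> yp (sol w T) $ i)" for w
  have Bd_comps: "mp (Bd w) = mp w" "pp (Bd w) = pp (sol w T)" "yp (Bd w) = yp (sol w T)" "cp (Bd w) = cp w" for w
    by (simp_all add: Bd_def mp_def pp_def yp_def cp_def vec_eq_iff)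
  have sol_add: "sol (x + y) t = sol x t + sol y t" and sol_scale: "sol (c *\<^sub>R x) t = c *\<^sub>R sol x t" for x y c t
    by (simp_all add: sol_def matrix_vector_right_distrib matrix_vector_mult_scaleR)
  have linBd: "linear Bd"
    by (rule linearI) (simp_all add: vec_eq_comps Bd_comps comps_add comps_scale sol_add sol_scale)
  have injBd: "inj Bd"
    unfolding linear_injective_0[OF linBd]
  proof (intro allI impI)
    fix w assume B0: "Bd w = 0"
    then have c0: "cp w = 0" and m0': "mp w = 0" and pT': "pp (sol w T) = 0" and yT': "yp (sol w T) = 0"
      using Bd_comps[of w] comps_zero by metis+
    have "\<forall>t\<in>{0..T}. mp (sol w t) = 0 \<and> pp (sol w t) = 0 \<and> yp (sol w t) = 0"
      by (rule uniq) (use solT[of _ w] c0 m0' pT' yT' sol0 in auto)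
    then have "mp (sol w 0) = 0 \<and> pp (sol w 0) = 0 \<and> yp (sol w 0) = 0" using T by auto
    then show "w = 0" using c0 sol0[of w] by (simp add: vec_eq_comps comps_zero)
  qed
  have "surj Bd" using linBd injBd linear_inj_imp_surj by blast
  define tgt :: "real^(('n + ('n + 'n)) option)"
    where "tgt = (\<chi> j. case j of None \<Rightarrow> 1 | Some (Inl i) \<Rightarrow> m0 $ i | Some (Inr _) \<Rightarrow> 0)"
  obtain w where w: "Bd w = tgt" using \<open>surj Bd\<close> by (metis surjD)
  have tc: "mp tgt = m0" "pp tgt = 0" "yp tgt = 0" "cp tgt = 1"
    by (simp_all add: tgt_def mp_def pp_def yp_def cp_def vec_eq_iff)
  have wc: "cp w = 1" "mp w = m0" "pp (sol w T) = 0" "yp (sol w T) = 0"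
    using Bd_comps[of w] tc unfolding w by simp_all
  show ?thesis
    by (rule exI[of _ "\<lambda>t. mp (sol w t)"], rule exI[of _ "\<lambda>t. pp (sol w t)"], rule exI[of _ "\<lambda>t. yp (sol w t)"])
       (use solT[of _ w] wc sol0 in auto)
qed


theorem theorem15:
  fixes A G \<Gamma> Q H :: "real^'n^'n"
    and B :: "real^'k^'n" and R :: "real^'k^'k"
    and \<eta> m0 :: "real^'n" and \<gamma> T :: real
    and K :: "real \<Rightarrow> real^'n^'n" and \<Phi> :: "real \<Rightarrow> real \<Rightarrow> real^'n^'n"
  assumes T_pos: "T > 0" and gamma_pos: "\<gamma> > 0"
    and Q_psd: "psd Q" and H_psd: "psd H" and R_pd: "pd R"
    and H_zero: "H = 0"
    and K_sol: "riccati_sol A G \<gamma> (transpose (mat 1 - \<Gamma>) ** Q ** (mat 1 - \<Gamma>)) H T K"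
    and K_unique: "\<And>K'. riccati_sol A G \<gamma> (transpose (mat 1 - \<Gamma>) ** Q ** (mat 1 - \<Gamma>)) H T K'
                      \<Longrightarrow> \<forall>t\<in>{0..T}. K' t = K t"
    and Phi: "fundamental_matrix A G \<gamma> K T \<Phi>"
    and small: "(SUP ts\<in>{0..T}\<times>{0..T}. norm (\<Phi> (fst ts) (snd ts)))
                * norm (B ** matrix_inv R ** transpose B) * norm (Q ** (mat 1 - \<Gamma>))
                * ((SUP t\<in>{0..T}. integral {t..T} (\<lambda>s. norm (mexp ((s - t) *\<^sub>R A)) * s))
                   + \<gamma> * (SUP t\<in>{0..T}. norm (K t))
                       * (SUP ts\<in>{0..T}\<times>{0..T}. norm (\<Phi> (fst ts) (snd ts)))
                       * (SUP t\<in>{0..T}. integral {t..T}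
                            (\<lambda>s. norm (mexp ((s - t) *\<^sub>R A)) * (T * s - s\<^sup>2 / 2))))
                < 1"
  shows "\<exists>m p y. MF_sol A G \<Gamma> B R Q H \<eta> m0 \<gamma> T m p y \<and>
           (\<forall>m' p' y'. MF_sol A G \<Gamma> B R Q H \<eta> m0 \<gamma> T m' p' y' \<longrightarrow>
              (\<forall>t\<in>{0..T}. m' t = m t \<and> p' t = p t \<and> y' t = y t))"
proof -
  define N where "N = B ** matrix_inv R ** transpose B"
  define Qh where "Qh = transpose (mat 1 - \<Gamma>) ** Q ** (mat 1 - \<Gamma>)"
  have Qs: "transpose Q = Q" using Q_psd unfolding psd_def by simp
  have KT: "K T = 0" using K_sol H_zero unfolding riccati_sol_def by simp
  have dK: "(K has_vector_derivative (- (K t ** (A + G)) - transpose (A + G) ** K t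
              + \<gamma> *\<^sub>R (K t ** K t) + transpose (mat 1 - \<Gamma>) ** Q ** (mat 1 - \<Gamma>))) (at t within {0..T})"
    if "t \<in> {0..T}" for t
    using K_sol that unfolding riccati_sol_def by blast
  have Ks: "transpose (K t) = K t" if t: "t \<in> {0..T}" for t
  proof -
    have "riccati_sol A G \<gamma> Qh H T (\<lambda>t. transpose (K t))"
      unfolding riccati_sol_def
    proof (intro conjI ballI)
      show "transpose (K T) = - H" using KT H_zero by (simp add: transpose_def vec_eq_iff)
      fix t assume t: "t \<in> {0..T}"
      have "((\<lambda>t. transpose (K t)) has_vector_derivative transpose (- (K t ** (A + G)) - transpose (A + G) ** K t
              + \<gamma> *\<^sub>R (K t ** K t) + transpose (mat 1 - \<Gamma>) ** Q ** (mat 1 - \<Gamma>))) (at t within {0..T})"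
        by (rule bounded_linear.has_vector_derivative[OF bl_transpose dK[OF t]])
      moreover have "transpose (- (K t ** (A + G)) - transpose (A + G) ** K t
              + \<gamma> *\<^sub>R (K t ** K t) + transpose (mat 1 - \<Gamma>) ** Q ** (mat 1 - \<Gamma>))
          = - (transpose (K t) ** (A + G)) - transpose (A + G) ** transpose (K t) + \<gamma> *\<^sub>R (transpose (K t) ** transpose (K t)) + Qh"
        unfolding Qh_def using Qs
        by (simp add: transpose_add transpose_diff transpose_neg transpose_scalar matrix_transpose_mul matrix_mul_assoc)
      ultimately show "((\<lambda>t. transpose (K t)) has_vector_derivative - (transpose (K t) ** (A + G)) - transpose (A + G) ** transpose (K t) + \<gamma> *\<^sub>R (transpose (K t) ** transpose (K t)) + Qh) (at t within {0..T})"
        by simp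
    qed
    then show ?thesis using K_unique t unfolding Qh_def by blast
  qed
  have uniq: "\<forall>t\<in>{0..T}. m t = 0 \<and> p t = 0 \<and> y t = 0"
    if "m 0 = 0" "p T = 0" "y T = 0"
      "\<And>t. t \<in> {0..T} \<Longrightarrow> (m has_vector_derivative ((A + G) *v m t + N *v y t + \<gamma> *\<^sub>R p t)) (at t within {0..T})"
      "\<And>t. t \<in> {0..T} \<Longrightarrow> (p has_vector_derivative (- (transpose (A + G) *v p t) - (transpose (mat 1 - \<Gamma>) ** Q) *v (m t - (\<Gamma> *v m t + 0)))) (at t within {0..T})"
      "\<And>t. t \<in> {0..T} \<Longrightarrow> (y has_vector_derivative (- (transpose A *v y t) + Q *v (m t - (\<Gamma> *v m t + 0)))) (at t within {0..T})"
    for m p y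
    by (rule homog_zero[OF T_pos gamma_pos dK KT Ks Phi small[folded N_def] that(4-6) that(1-3)])
  obtain m p y where ex: "m 0 = m0" "p T = 0" "y T = 0" "\<forall>t\<in>{0..T}.
        (m has_vector_derivative ((A + G) *v m t + N *v y t + \<gamma> *\<^sub>R p t)) (at t within {0..T}) \<and>
        (p has_vector_derivative (- (transpose (A + G) *v p t) - (transpose (mat 1 - \<Gamma>) ** Q) *v (m t - (\<Gamma> *v m t + \<eta>)))) (at t within {0..T}) \<and>
        (y has_vector_derivative (- (transpose A *v y t) + Q *v (m t - (\<Gamma> *v m t + \<eta>)))) (at t within {0..T})"
    using existence[OF T_pos uniq] by blast
  have sol: "MF_sol A G \<Gamma> B R Q H \<eta> m0 \<gamma> T m p y"
    unfolding MF_sol_def using ex H_zero by (simp add: N_def del: transpose_matrix_vector)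
  show ?thesis
  proof (intro exI conjI allI impI, rule sol)
    fix m' p' y' assume s': "MF_sol A G \<Gamma> B R Q H \<eta> m0 \<gamma> T m' p' y'"
    have "\<forall>t\<in>{0..T}. (\<lambda>t. m' t - m t) t = 0 \<and> (\<lambda>t. p' t - p t) t = 0 \<and> (\<lambda>t. y' t - y t) t = 0"
    proof (rule uniq)
      show "m' 0 - m 0 = 0" "p' T - p T = 0" "y' T - y T = 0"
        using s' sol H_zero unfolding MF_sol_def by simp_all
    next
      fix t assume t: "t \<in> {0..T}"
      have d1: "(m' has_vector_derivative ((A + G) *v m' t + N *v y' t + \<gamma> *\<^sub>R p' t)) (at t within {0..T})"
        and d2: "(m has_vector_derivative ((A + G) *v m t + N *v y t + \<gamma> *\<^sub>R p t)) (at t within {0..T})"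
        and e1: "(p' has_vector_derivative (- (transpose (A + G) *v p' t) - (transpose (mat 1 - \<Gamma>) ** Q) *v (m' t - (\<Gamma> *v m' t + \<eta>)))) (at t within {0..T})"
        and e2: "(p has_vector_derivative (- (transpose (A + G) *v p t) - (transpose (mat 1 - \<Gamma>) ** Q) *v (m t - (\<Gamma> *v m t + \<eta>)))) (at t within {0..T})"
        and f1: "(y' has_vector_derivative (- (transpose A *v y' t) + Q *v (m' t - (\<Gamma> *v m' t + \<eta>)))) (at t within {0..T})"
        and f2: "(y has_vector_derivative (- (transpose A *v y t) + Q *v (m t - (\<Gamma> *v m t + \<eta>)))) (at t within {0..T})"
        using s' sol t unfolding MF_sol_def N_def by (auto simp del: transpose_matrix_vector)
      show "((\<lambda>t. m' t - m t) has_vector_derivative ((A + G) *v (m' t - m t) + N *v (y' t - y t) + \<gamma> *\<^sub>R (p' t - p t))) (at t within {0..T})"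
        using has_vector_derivative_diff[OF d1 d2] by (simp add: mvs algebra_simps del: transpose_matrix_vector)
      show "((\<lambda>t. p' t - p t) has_vector_derivative (- (transpose (A + G) *v (p' t - p t)) - (transpose (mat 1 - \<Gamma>) ** Q) *v ((m' t - m t) - (\<Gamma> *v (m' t - m t) + 0)))) (at t within {0..T})"
        using has_vector_derivative_diff[OF e1 e2] by (simp add: mvs algebra_simps del: transpose_matrix_vector)
      show "((\<lambda>t. y' t - y t) has_vector_derivative (- (transpose A *v (y' t - y t)) + Q *v ((m' t - m t) - (\<Gamma> *v (m' t - m t) + 0)))) (at t within {0..T})"
        using has_vector_derivative_diff[OF f1 f2] by (simp add: mvs algebra_simps del: transpose_matrix_vector)
    qed
    then show "\<forall>t\<in>{0..T}. m' t = m t \<and> p' t = p t \<and> y' t = y t" by simp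
  qed
qed


end
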